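(* Let $p\in(0,1)$ and let $(\lambda_n)_{n\ge1}$ be a sequence with $\lambda_1=1$ and $0\le\lambda_n\le\lambda_{n-1}$ for all $n>1$. Let $r_1,r_2,\dots$ be $\{0,1\}$-valued random variables with $\Pr(r_1=1)=p$ and, for every $n\ge2$, $\Pr(r_n=1\mid r_1,\dots,r_{n-1})=\lambda_n p+(1-\lambda_n)\bar p_{n-1}$, where $\bar p_m=\frac1m\sum_{i=1}^m r_i$. For values $\hat\lambda_k\in(0,1]$, $k\ge2$, define $\hat r_1=r_1$ and $\hat r_k=\frac{r_k-(1-\hat\lambda_k)\bar p_{k-1}}{\hat\lambda_k}$ for $k\ge2$. Let $i>j\ge1$ with $\lambda_i>0$ and $\hat\lambda_i=\lambda_i$. Then $\hat r_i$ and $\hat r_j$ are uncorrelated, i.e. $\mathbb{E}[\hat r_i\hat r_j]=\mathbb{E}[\hat r_i]\,\mathbb{E}[\hat r_j]$. *)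

theory Defs
  imports "HOL-Probability.Probability"
begin

definition pbar :: "(nat \<Rightarrow> 'a \<Rightarrow> real) \<Rightarrow> nat \<Rightarrow> 'a \<Rightarrow> real" where
  "pbar r m x = (\<Sum>i=1..m. r i x) / real m"

definition rhat :: "(nat \<Rightarrow> real) \<Rightarrow> (nat \<Rightarrow> 'a \<Rightarrow> real) \<Rightarrow> nat \<Rightarrow> 'a \<Rightarrow> real" where
  "rhat lh r k x = (if k = 1 then r 1 x else (r k x - (1 - lh k) * pbar r (k - 1) x) / lh k)"

end

theory Submission
  imports Defs
begin

theorem lemmaA12:
  fixes M :: "'a measure" and p :: real and lam lh :: "nat \<Rightarrow> real"
    and r :: "nat \<Rightarrow> 'a \<Rightarrow> real" and i j :: nat
  assumes "prob_space M"
    and "0 < p" "p < 1"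
    and "lam 1 = 1"
    and "\<And>n. n > 1 \<Longrightarrow> 0 \<le> lam n \<and> lam n \<le> lam (n - 1)"
    and "\<And>n. n \<ge> 1 \<Longrightarrow> r n \<in> borel_measurable M"
    and "\<And>n x. n \<ge> 1 \<Longrightarrow> x \<in> space M \<Longrightarrow> r n x \<in> {0, 1}"
    and "measure M {x \<in> space M. r 1 x = 1} = p"
    and "\<And>n b. n \<ge> 2 \<Longrightarrow> (\<forall>k\<in>{1..n-1}. b k \<in> {0, 1}) \<Longrightarrow>
           measure M {x \<in> space M. r n x = 1 \<and> (\<forall>k\<in>{1..n-1}. r k x = b k)}
           = (lam n * p + (1 - lam n) * ((\<Sum>k=1..n-1. b k) / real (n - 1)))
             * measure M {x \<in> space M. \<forall>k\<in>{1..n-1}. r k x = b k}"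
    and "\<And>k. k \<ge> 2 \<Longrightarrow> 0 < lh k \<and> lh k \<le> 1"
    and "1 \<le> j" "j < i"
    and "lam i > 0"
    and "lh i = lam i"
  shows "integral\<^sup>L M (\<lambda>x. rhat lh r i x * rhat lh r j x)
         = integral\<^sup>L M (rhat lh r i) * integral\<^sup>L M (rhat lh r j)"
proof -
  interpret prob_space M by fact
  define m where "m = i - 1"
  have i2: "i \<ge> 2" "m \<ge> 1" "Suc m = i" "j \<le> m" using assms(11,12) by (auto simp: m_def)
  define B where "B = PiE {1..m} (\<lambda>_. {0,1::real})"
  define A where "A b = {x\<in>space M. \<forall>k\<in>{1..m}. r k x = b k}" for b :: "nat \<Rightarrow> real"
  define C where "C b = {x\<in>space M. r i x = 1 \<and> (\<forall>k\<in>{1..m}. r k x = b k)}" for b :: "nat \<Rightarrow> real"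
  define rx where "rx x = restrict (\<lambda>k. r k x) {1..m}" for x
  have finB: "finite B" unfolding B_def by (simp add: finite_PiE)
  have rxB: "rx x \<in> B" if "x \<in> space M" for x
    using assms(7) that unfolding rx_def B_def by (auto simp: PiE_iff)
  have indA: "indicator (A b) x = (if b = rx x then 1 else 0 :: real)"
    if "x \<in> space M" "b \<in> B" for x b
  proof -
    have "(\<forall>k\<in>{1..m}. r k x = b k) \<longleftrightarrow> b = rx x"
      using that(2) unfolding B_def rx_def
      by (auto simp: PiE_iff extensional_def fun_eq_iff)
    then show ?thesis using that(1) by (auto simp: A_def indicator_def)
  qed
  have decomp: "(\<Sum>b\<in>B. F b * indicator (A b) x) = F (rx x)" if "x \<in> space M" for F :: "(nat \<Rightarrow> real) \<Rightarrow> real" and x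
  proof -
    have "(\<Sum>b\<in>B. F b * indicator (A b) x) = (\<Sum>b\<in>B. if b = rx x then F b else 0)"
      by (rule sum.cong) (auto simp: indA that)
    also have "\<dots> = F (rx x)" using finB rxB[OF that] by simp
    finally show ?thesis .
  qed
  have measr: "r k \<in> borel_measurable M" if "k \<in> {1..m}" for k using assms(6) that by auto
  have setsA: "A b \<in> sets M" for b
    unfolding A_def
  proof (rule sets.sets_Collect_finite_All)
    fix k assume k: "k \<in> {1..m}"
    have "{x \<in> space M. r k x = b k} = r k -` {b k} \<inter> space M" by auto
    then show "{x \<in> space M. r k x = b k} \<in> sets M"
      using measurable_sets[OF measr[OF k], of "{b k}"] by simp
  qed simp
  have setsC: "C b \<in> sets M" for b
  proof -
    have "C b = {x\<in>space M. r i x = 1} \<inter> A b" by (auto simp: A_def C_def)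
    moreover have "{x\<in>space M. r i x = 1} \<in> sets M"
      using measurable_sets[OF assms(6)[of i], of "{1}"] i2 by (simp add: vimage_def Int_def conj_commute)
    ultimately show ?thesis using setsA by simp
  qed
  have indC: "indicator (C b) x = r i x * indicator (A b) x" if "x \<in> space M" for b x
    using assms(7)[of i x] that i2 by (auto simp: A_def C_def indicator_def)
  define mean where "mean b = (\<Sum>k=1..m. b k) / real m" for b :: "nat \<Rightarrow> real"
  have meanrx: "mean (rx x) = pbar r m x" for x
    unfolding mean_def rx_def pbar_def
    by (rule arg_cong[where f="\<lambda>s. s / real m"], rule sum.cong) auto
  have rhati: "rhat lh r i x = (r i x - (1 - lam i) * pbar r m x) / lam i" for x
  proof -
    have "i \<noteq> 1" using i2(1) by simp
    then show ?thesis using assms(14) by (simp add: rhat_def m_def)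
  qed
  have intI: "integrable M (indicator (A b) :: 'a \<Rightarrow> real)" "integrable M (indicator (C b) :: 'a \<Rightarrow> real)" for b
    using setsA setsC by (auto intro!: integrable_real_indicator simp: less_top[symmetric])
  have AC_sub: "A b \<inter> space M = A b" "C b \<inter> space M = C b" for b
    by (auto simp: A_def C_def)
  have intA: "integral\<^sup>L M (\<lambda>x. G (rx x)) = (\<Sum>b\<in>B. G b * measure M (A b))" for G :: "(nat \<Rightarrow> real) \<Rightarrow> real"
  proof -
    have "integral\<^sup>L M (\<lambda>x. G (rx x)) = integral\<^sup>L M (\<lambda>x. \<Sum>b\<in>B. G b * indicator (A b) x)"
      by (rule Bochner_Integration.integral_cong[OF refl]) (auto simp: decomp)
    also have "\<dots> = (\<Sum>b\<in>B. integral\<^sup>L M (\<lambda>x. G b * indicator (A b) x))"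
      by (rule Bochner_Integration.integral_sum[where f="\<lambda>b x. G b * indicator (A b) x"]) (intro integrable_mult_right intI)
    also have "\<dots> = (\<Sum>b\<in>B. G b * measure M (A b))"
      by (simp add: AC_sub)
    finally show ?thesis .
  qed
  have lpos: "lam i > 0" by (rule assms(13))
  have key: "integral\<^sup>L M (\<lambda>x. rhat lh r i x * G (rx x)) = p * integral\<^sup>L M (\<lambda>x. G (rx x))" for G :: "(nat \<Rightarrow> real) \<Rightarrow> real"
  proof -
    have pw: "rhat lh r i x * G (rx x) = (\<Sum>b\<in>B. G b / lam i * indicator (C b) x - G b * (1 - lam i) * mean b / lam i * indicator (A b) x)"
      if x: "x \<in> space M" for x
    proof -
      have "(\<Sum>b\<in>B. G b / lam i * indicator (C b) x - G b * (1 - lam i) * mean b / lam i * indicator (A b) x)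
          = (\<Sum>b\<in>B. (G b * (r i x - (1 - lam i) * mean b) / lam i) * indicator (A b) x)"
        by (rule sum.cong[OF refl]) (use lpos in \<open>simp add: indC[OF x] field_simps\<close>)
      also have "\<dots> = G (rx x) * (r i x - (1 - lam i) * mean (rx x)) / lam i"
        by (rule decomp[OF x])
      finally show ?thesis by (simp add: rhati meanrx)
    qed
    have "integral\<^sup>L M (\<lambda>x. rhat lh r i x * G (rx x))
        = integral\<^sup>L M (\<lambda>x. \<Sum>b\<in>B. G b / lam i * indicator (C b) x - G b * (1 - lam i) * mean b / lam i * indicator (A b) x)"
      by (rule Bochner_Integration.integral_cong[OF refl]) (auto simp: pw)
    also have "\<dots> = (\<Sum>b\<in>B. integral\<^sup>L M (\<lambda>x. G b / lam i * indicator (C b) x - G b * (1 - lam i) * mean b / lam i * indicator (A b) x))"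
      by (rule Bochner_Integration.integral_sum[where f="\<lambda>b x. G b / lam i * indicator (C b) x - G b * (1 - lam i) * mean b / lam i * indicator (A b) x"])
        (simp add: intI)
    also have "\<dots> = (\<Sum>b\<in>B. G b / lam i * measure M (C b) - G b * (1 - lam i) * mean b / lam i * measure M (A b))"
      by (rule sum.cong[OF refl]) (simp add: intI AC_sub)
    also have "\<dots> = (\<Sum>b\<in>B. p * (G b * measure M (A b)))"
    proof (rule sum.cong[OF refl])
      fix b assume b: "b \<in> B"
      have mC: "measure M (C b) = (lam i * p + (1 - lam i) * mean b) * measure M (A b)"
        using assms(9)[of i b] b i2 unfolding C_def A_def mean_def B_def
        by (auto simp: m_def PiE_iff)
      show "G b / lam i * measure M (C b) - G b * (1 - lam i) * mean b / lam i * measure M (A b) = p * (G b * measure M (A b))"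
        unfolding mC using lpos by (simp add: field_simps)
    qed
    finally show ?thesis by (simp add: intA sum_distrib_left)
  qed
  define Gj where "Gj b = rhat lh (\<lambda>k (_::unit). b k) j ()" for b
  have rj: "rhat lh r j x = Gj (rx x)" for x
    using i2 assms(11) unfolding Gj_def rhat_def pbar_def rx_def by (auto intro!: sum.cong)
  have k1: "integral\<^sup>L M (rhat lh r i) = p"
    using key[of "\<lambda>_. 1"] by (simp add: prob_space)
  show ?thesis
    using key[of Gj] k1 by (simp add: rj[abs_def])
qed

end
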